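(* Let $X$ be a real Banach space and $Y$ a closed subspace of $X$. The following are equivalent: (a) $Y$ has property-$(wU)$ in $X$. (b) For every proximinal closed subspace $Z\subseteq Y$, the subspace $Y/Z$ has property-$(wU)$ in $X/Z$. (c) For every $x^*\in X^*$ such that $x^*(y)=\|x^*\|$ for some $y\in S_Y$, one has $P_{Y^\perp}(x^* )=\{0\}$.
   Context: For a closed subspace $Y$ of $X$ and $y^*\in Y^*$, a norm-preserving (Hahn--Banach) extension of $y^*$ is an $x^*\in X^*$ with $x^*|_Y=y^*$ and $\|x^*\|=\|y^*\|$. $Y$ has property-$(wU)$ in $X$ if every $y^*\in Y^*$ that attains its norm on the unit sphere $S_Y$ (i.e. $\|y^*\|=y^*(y_0)$ for some $y_0\in S_Y$) has a unique norm-preserving extension to $X$. A subspace $Z$ of a normed space $W$ is proximinal if for each $w\in W$ the set $P_Z(w)=\{z\in Z:\|w-z\|=d(w,Z)\}$ is nonempty, where $d(w,Z)=\inf_{z\in Z}\|w-z\|$. $Y^\perp=\{x^*\in X^*: x^*|_Y=0\}$, and $P_{Y^\perp}(x^* )$ is the set of best approximations to $x^*$ from $Y^\perp$ in $X^*$. $Y/Z$ is regarded as a subspace of $X/Z$ with the quotient norm. *)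

theory Defs
  imports "HOL-Analysis.Analysis"
begin

text \<open>A normed space is presented generically by a carrier set V, an addition ad,
  a scalar multiplication sc and a norm N.  This lets us treat X itself and the
  quotient space X/Z (whose elements are cosets, i.e. sets) uniformly.\<close>

definition lin_on :: "'v set \<Rightarrow> ('v \<Rightarrow> 'v \<Rightarrow> 'v) \<Rightarrow> (real \<Rightarrow> 'v \<Rightarrow> 'v) \<Rightarrow> ('v \<Rightarrow> real) \<Rightarrow> bool" where
  "lin_on V ad sc f \<longleftrightarrow>
     (\<forall>u\<in>V. \<forall>v\<in>V. f (ad u v) = f u + f v) \<and> (\<forall>c. \<forall>v\<in>V. f (sc c v) = c * f v)"

definition bdd_on :: "'v set \<Rightarrow> ('v \<Rightarrow> real) \<Rightarrow> ('v \<Rightarrow> real) \<Rightarrow> bool" where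
  "bdd_on V N f \<longleftrightarrow> (\<exists>K. \<forall>v\<in>V. \<bar>f v\<bar> \<le> K * N v)"

text \<open>f is an element of the dual space of the normed space (V, ad, sc, N).\<close>
definition dual_on :: "'v set \<Rightarrow> ('v \<Rightarrow> 'v \<Rightarrow> 'v) \<Rightarrow> (real \<Rightarrow> 'v \<Rightarrow> 'v) \<Rightarrow> ('v \<Rightarrow> real) \<Rightarrow> ('v \<Rightarrow> real) \<Rightarrow> bool" where
  "dual_on V ad sc N f \<longleftrightarrow> lin_on V ad sc f \<and> bdd_on V N f"

text \<open>Dual norm of a functional on V.\<close>
definition fnorm :: "'v set \<Rightarrow> ('v \<Rightarrow> real) \<Rightarrow> ('v \<Rightarrow> real) \<Rightarrow> real" where
  "fnorm V N f = Sup ((\<lambda>v. \<bar>f v\<bar>) ` {v\<in>V. N v \<le> 1})"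

text \<open>Property-(wU) of a subspace W in the normed space V: every norm-attaining
  functional on W has a unique norm-preserving extension to V (functionals are
  compared on the carrier V only).\<close>
definition wU :: "'v set \<Rightarrow> ('v \<Rightarrow> 'v \<Rightarrow> 'v) \<Rightarrow> (real \<Rightarrow> 'v \<Rightarrow> 'v) \<Rightarrow> ('v \<Rightarrow> real) \<Rightarrow> 'v set \<Rightarrow> bool" where
  "wU V ad sc N W \<longleftrightarrow>
    (\<forall>g. dual_on W ad sc N g \<and> (\<exists>w0\<in>W. N w0 = 1 \<and> g w0 = fnorm W N g) \<longrightarrow>
       (\<exists>f. dual_on V ad sc N f \<and> (\<forall>w\<in>W. f w = g w) \<and> fnorm V N f = fnorm W N g) \<and>
       (\<forall>f1 f2. dual_on V ad sc N f1 \<and> (\<forall>w\<in>W. f1 w = g w) \<and> fnorm V N f1 = fnorm W N g \<and>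
                dual_on V ad sc N f2 \<and> (\<forall>w\<in>W. f2 w = g w) \<and> fnorm V N f2 = fnorm W N g
                \<longrightarrow> (\<forall>v\<in>V. f1 v = f2 v)))"

text \<open>Quotient space X/Z: cosets x + Z with the quotient norm.\<close>
definition coset :: "'a::real_normed_vector set \<Rightarrow> 'a \<Rightarrow> 'a set" where
  "coset Z x = (\<lambda>z. x + z) ` Z"

definition quot_carrier :: "'a::real_normed_vector set \<Rightarrow> 'a set \<Rightarrow> 'a set set" where
  "quot_carrier Z S = coset Z ` S"

definition qadd :: "'a::real_normed_vector set \<Rightarrow> 'a set \<Rightarrow> 'a set" where
  "qadd A B = {a + b | a b. a \<in> A \<and> b \<in> B}"

definition qscale :: "'a::real_normed_vector set \<Rightarrow> real \<Rightarrow> 'a set \<Rightarrow> 'a set" where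
  "qscale Z c A = {c *\<^sub>R a + z | a z. a \<in> A \<and> z \<in> Z}"

text \<open>Quotient norm of the coset A: the distance of A to 0, i.e. d(x,Z) for A = x + Z.\<close>
definition qnorm :: "'a::real_normed_vector set \<Rightarrow> real" where
  "qnorm A = infdist 0 A"

definition proximinal :: "'a::real_normed_vector set \<Rightarrow> bool" where
  "proximinal Z \<longleftrightarrow> (\<forall>x. \<exists>z\<in>Z. dist x z = infdist x Z)"

text \<open>Annihilator Y^perp in X^* and best approximations P_{Y^perp}(f) in X^*
  (with the operator norm).\<close>
definition annihilator :: "'a::real_normed_vector set \<Rightarrow> ('a \<Rightarrow> real) set" where
  "annihilator Y = {g. bounded_linear g \<and> (\<forall>y\<in>Y. g y = 0)}"

definition best_approx_dual :: "('a::real_normed_vector \<Rightarrow> real) set \<Rightarrow> ('a \<Rightarrow> real) \<Rightarrow> ('a \<Rightarrow> real) set" where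
  "best_approx_dual M f =
     {g \<in> M. onorm (\<lambda>x. f x - g x) = (INF h\<in>M. onorm (\<lambda>x. f x - h x))}"

end

theory Submission
  imports Defs
begin

definition lgraph :: "'a::real_normed_vector set \<Rightarrow> ('a \<Rightarrow> real) \<Rightarrow> real \<Rightarrow> ('a \<times> real) set \<Rightarrow> bool" where
"lgraph Y g C G \<longleftrightarrow> (\<forall>x r s. (x,r)\<in>G \<longrightarrow> (x,s)\<in>G \<longrightarrow> r=s) \<and>
  (\<forall>x r y s. (x,r)\<in>G \<longrightarrow> (y,s)\<in>G \<longrightarrow> (x+y,r+s)\<in>G) \<and>
  (\<forall>x r c. (x,r)\<in>G \<longrightarrow> (c *\<^sub>R x, c*r)\<in>G) \<and> (\<forall>y\<in>Y. (y, g y)\<in>G) \<and>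
  (\<forall>x r. (x,r)\<in>G \<longrightarrow> r \<le> C * norm x)"


lemma lg_fun: "lgraph Y g C G \<Longrightarrow> (x,r)\<in>G \<Longrightarrow> (x,s)\<in>G \<Longrightarrow> r=s"
  unfolding lgraph_def by metis
lemma lg_add: "lgraph Y g C G \<Longrightarrow> (x,r)\<in>G \<Longrightarrow> (y,s)\<in>G \<Longrightarrow> (x+y,r+s)\<in>G"
  unfolding lgraph_def by metis
lemma lg_scl: "lgraph Y g C G \<Longrightarrow> (x,r)\<in>G \<Longrightarrow> (c *\<^sub>R x, c*r)\<in>G"
  unfolding lgraph_def by metis
lemma lg_Y: "lgraph Y g C G \<Longrightarrow> y\<in>Y \<Longrightarrow> (y, g y)\<in>G"
  unfolding lgraph_def by metis
lemma lg_bnd: "lgraph Y g C G \<Longrightarrow> (x,r)\<in>G \<Longrightarrow> r \<le> C * norm x"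
  unfolding lgraph_def by metis

lemma lgraph_chain:
  assumes "Cs \<in> chains {G. lgraph Y g C G}" "Cs \<noteq> {}"
  shows "lgraph Y g C (\<Union>Cs)"
proof -
  have sub: "\<And>G. G \<in> Cs \<Longrightarrow> lgraph Y g C G" using assms(1) by (auto simp: chains_def)
  have ch: "\<And>G H. G \<in> Cs \<Longrightarrow> H \<in> Cs \<Longrightarrow> G \<subseteq> H \<or> H \<subseteq> G"
    using assms(1) by (auto simp: chains_def chain_subset_def)
  show ?thesis unfolding lgraph_def
  proof (intro conjI allI impI ballI)
    fix x r s assume "(x,r) \<in> \<Union>Cs" "(x,s) \<in> \<Union>Cs"
    then obtain G H where "G\<in>Cs" "H\<in>Cs" "(x,r)\<in>G" "(x,s)\<in>H" by auto
    then show "r = s" using ch[of G H] lg_fun[OF sub[of G]] lg_fun[OF sub[of H]] by blast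
  next
    fix x r y s assume "(x,r) \<in> \<Union>Cs" "(y,s) \<in> \<Union>Cs"
    then obtain G H where GH: "G\<in>Cs" "H\<in>Cs" "(x,r)\<in>G" "(y,s)\<in>H" by auto
    show "(x+y,r+s) \<in> \<Union>Cs"
    proof (cases "G \<subseteq> H")
      case True then show ?thesis using GH lg_add[OF sub[of H]] by blast
    next
      case False then have "H \<subseteq> G" using ch GH by blast
      then show ?thesis using GH lg_add[OF sub[of G]] by blast
    qed
  next
    fix x r c assume "(x,r) \<in> \<Union>Cs"
    then show "(c *\<^sub>R x, c*r) \<in> \<Union>Cs" using lg_scl[OF sub] by blast
  next
    fix y assume "y \<in> Y"
    then show "(y, g y) \<in> \<Union>Cs" using lg_Y[OF sub] assms(2) by blast
  next
    fix x r assume "(x,r) \<in> \<Union>Cs"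
    then show "r \<le> C * norm x" using lg_bnd[OF sub] by blast
  qed
qed

lemma lgraph_extend:
  assumes M: "lgraph Y g C M" and C: "C \<ge> 0" and ne: "Y \<noteq> {}" and x0: "\<forall>r. (x0,r) \<notin> M"
  shows "\<exists>M'. lgraph Y g C M' \<and> M \<subseteq> M' \<and> M' \<noteq> M"
proof -
  from M have funct: "\<And>x r s. (x,r)\<in>M \<Longrightarrow> (x,s)\<in>M \<Longrightarrow> r=s"
    and add: "\<And>x r y s. (x,r)\<in>M \<Longrightarrow> (y,s)\<in>M \<Longrightarrow> (x+y,r+s)\<in>M"
    and scl: "\<And>x r c. (x,r)\<in>M \<Longrightarrow> (c *\<^sub>R x, c*r)\<in>M"
    and Yin: "\<And>y. y\<in>Y \<Longrightarrow> (y, g y)\<in>M"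
    and bnd: "\<And>x r. (x,r)\<in>M \<Longrightarrow> r \<le> C * norm x"
    using lg_fun[OF M] lg_add[OF M] lg_scl[OF M] lg_Y[OF M] lg_bnd[OF M] by auto
  obtain y where "y \<in> Y" using ne by auto
  then have zero: "(0,0) \<in> M" using scl[of y "g y" 0] Yin by auto
  define L where "L = (\<lambda>p. snd p - C * norm (fst p - x0)) ` M"
  define a where "a = Sup L"
  have key: "r1 - C * norm (s1 - x0) \<le> C * norm (s2 + x0) - r2"
    if "(s1,r1)\<in>M" "(s2,r2)\<in>M" for s1 r1 s2 r2
  proof -
    have "r1 + r2 \<le> C * norm (s1 + s2)" using bnd add that by blast
    also have "norm (s1 + s2) \<le> norm (s1 - x0) + norm (s2 + x0)"
      using norm_triangle_ineq[of "s1 - x0" "s2 + x0"] by simp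
    then have "C * norm (s1 + s2) \<le> C * (norm (s1 - x0) + norm (s2 + x0))"
      using C by (simp add: mult_left_mono)
    finally show ?thesis by (simp add: algebra_simps)
  qed
  have Lne: "L \<noteq> {}" using zero unfolding L_def by auto
  have Lbdd: "bdd_above L" unfolding L_def bdd_above_def
    using key zero by fastforce
  have a_ge: "r - C * norm (s - x0) \<le> a" if "(s,r)\<in>M" for s r
    unfolding a_def using cSup_upper[OF _ Lbdd] that unfolding L_def by force
  have a_le: "a \<le> C * norm (s + x0) - r" if "(s,r)\<in>M" for s r
    unfolding a_def using that key by (intro cSup_least[OF Lne]) (auto simp: L_def)
  define M' where "M' = {(s + t *\<^sub>R x0, r + t * a) | s r t. (s,r) \<in> M}"
  have memM': "(x,r)\<in>M' \<longleftrightarrow> (\<exists>s q t. x = s + t *\<^sub>R x0 \<and> r = q + t * a \<and> (s,q)\<in>M)" for x r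
    unfolding M'_def by blast
  have sub: "M \<subseteq> M'" unfolding M'_def by force
  have new: "(x0, a) \<in> M'" unfolding M'_def using zero by force
  have x0notin: "t = 0" if "s + t *\<^sub>R x0 \<in> fst ` M" "(s,r)\<in>M" for s r t
  proof (rule ccontr)
    assume t: "t \<noteq> 0"
    from that obtain q where q: "(s + t *\<^sub>R x0, q) \<in> M" by force
    have "(s + t *\<^sub>R x0 + (-1) *\<^sub>R s, q + (-1) * r) \<in> M" using add scl q that(2) by blast
    then have "(t *\<^sub>R x0, q - r) \<in> M" by simp
    then have "((1/t) *\<^sub>R (t *\<^sub>R x0), (1/t) * (q - r)) \<in> M" using scl by blast
    then show False using x0 t by simp
  qed
  have lg: "lgraph Y g C M'" unfolding lgraph_def
  proof (intro conjI allI impI ballI)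
    fix x r1 r2 assume A: "(x,r1)\<in>M'" "(x,r2)\<in>M'"
    obtain s1 q1 t1 where h1: "x = s1 + t1 *\<^sub>R x0" "r1 = q1 + t1 * a" "(s1,q1)\<in>M"
      using A(1) memM' by blast
    obtain s2 q2 t2 where h2: "x = s2 + t2 *\<^sub>R x0" "r2 = q2 + t2 * a" "(s2,q2)\<in>M"
      using A(2) memM' by blast
    note h = h1 h2
    have "(s1 + (-1) *\<^sub>R s2, q1 + (-1)*q2) \<in> M" using add scl h by blast
    moreover have "s1 + (-1) *\<^sub>R s2 = 0 + (t2 - t1) *\<^sub>R x0" using h by (simp add: algebra_simps)
    ultimately have "t2 - t1 = 0" using x0notin[of 0 "t2 - t1" 0] zero by force
    then have "t1 = t2" "s1 = s2" using h by auto
    then show "r1 = r2" using h funct by auto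
  next
    fix x r y s assume A: "(x,r)\<in>M'" "(y,s)\<in>M'"
    obtain s1 q1 t1 where h1: "x = s1 + t1 *\<^sub>R x0" "r = q1 + t1 * a" "(s1,q1)\<in>M"
      using A(1) memM' by blast
    obtain s2 q2 t2 where h2: "y = s2 + t2 *\<^sub>R x0" "s = q2 + t2 * a" "(s2,q2)\<in>M"
      using A(2) memM' by blast
    note h = h1 h2
    have "(s1+s2, q1+q2)\<in>M" using add h by blast
    moreover have "x + y = (s1+s2) + (t1+t2) *\<^sub>R x0" "r + s = (q1+q2) + (t1+t2)*a"
      using h by (auto simp: algebra_simps)
    ultimately show "(x+y, r+s) \<in> M'" unfolding M'_def by blast
  next
    fix x r c assume "(x,r)\<in>M'"
    then obtain s1 q1 t1 where h: "x = s1 + t1 *\<^sub>R x0" "r = q1 + t1 * a" "(s1,q1)\<in>M"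
      using memM' by blast
    have "(c *\<^sub>R s1, c*q1)\<in>M" using scl h by blast
    moreover have "c *\<^sub>R x = c *\<^sub>R s1 + (c*t1) *\<^sub>R x0" "c * r = c*q1 + (c*t1)*a"
      using h by (auto simp: algebra_simps)
    ultimately show "(c *\<^sub>R x, c*r) \<in> M'" unfolding M'_def by blast
  next
    fix y assume "y\<in>Y" then show "(y, g y) \<in> M'" using Yin sub by blast
  next
    fix x r assume "(x,r)\<in>M'"
    then obtain s q t where h: "x = s + t *\<^sub>R x0" "r = q + t * a" "(s,q)\<in>M"
      using memM' by blast
    consider "t = 0" | "t > 0" | "t < 0" by linarith
    then show "r \<le> C * norm x"
    proof cases
      case 1 then show ?thesis using h bnd by auto
    next
      case 2
      have "((1/t) *\<^sub>R s, (1/t)*q) \<in> M" using scl h by blast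
      from a_le[OF this] have "t * a \<le> t * (C * norm ((1/t) *\<^sub>R s + x0) - (1/t)*q)"
        using 2 by (simp add: mult_left_mono)
      also have "\<dots> = C * (t * norm ((1/t) *\<^sub>R s + x0)) - q" using 2 by (simp add: algebra_simps)
      also have "t * norm ((1/t) *\<^sub>R s + x0) = norm (t *\<^sub>R ((1/t) *\<^sub>R s + x0))" using 2 by simp
      also have "t *\<^sub>R ((1/t) *\<^sub>R s + x0) = x" using 2 h by (simp add: algebra_simps)
      finally show ?thesis using h by simp
    next
      case 3
      define u where "u = -t"
      have u: "u > 0" using 3 u_def by simp
      have "((1/u) *\<^sub>R s, (1/u)*q) \<in> M" using scl h by blast
      from a_ge[OF this] have "u * ((1/u)*q - C * norm ((1/u) *\<^sub>R s - x0)) \<le> u * a"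
        using u by (simp add: mult_left_mono)
      moreover have "u * ((1/u)*q - C * norm ((1/u) *\<^sub>R s - x0)) = q - C * (u * norm ((1/u) *\<^sub>R s - x0))"
        using u by (simp add: algebra_simps)
      moreover have "u * norm ((1/u) *\<^sub>R s - x0) = norm (u *\<^sub>R ((1/u) *\<^sub>R s - x0))" using u by simp
      moreover have "u *\<^sub>R ((1/u) *\<^sub>R s - x0) = x" using u h u_def by (simp add: algebra_simps)
      ultimately have "q - C * norm x \<le> u * a" by simp
      moreover have "r = q - u * a" using h u_def by simp
      ultimately show ?thesis by simp
    qed
  qed
  have "M' \<noteq> M" using new x0 by blast
  then show ?thesis using lg sub by blast
qed

lemma hahn_banach:
  fixes g :: "'a::real_normed_vector \<Rightarrow> real"
  assumes Y: "subspace Y" and gadd: "\<forall>u\<in>Y. \<forall>v\<in>Y. g (u+v) = g u + g v"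
    and gscl: "\<forall>c. \<forall>v\<in>Y. g (c *\<^sub>R v) = c * g v"
    and gb: "\<forall>y\<in>Y. g y \<le> C * norm y" and C: "C \<ge> 0"
  shows "\<exists>f. linear f \<and> (\<forall>y\<in>Y. f y = g y) \<and> (\<forall>x. f x \<le> C * norm x)"
proof -
  let ?A = "{G. lgraph Y g C G}"
  define G0 where "G0 = (\<lambda>y. (y, g y)) ` Y"
  have G0: "lgraph Y g C G0" unfolding lgraph_def G0_def
  proof (intro conjI allI impI ballI)
    fix x r y s assume "(x, r) \<in> (\<lambda>y. (y, g y)) ` Y" "(y, s) \<in> (\<lambda>y. (y, g y)) ` Y"
    then show "(x + y, r + s) \<in> (\<lambda>y. (y, g y)) ` Y" using gadd Y
      by (auto simp: subspace_add)
  next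
    fix x r c assume "(x, r) \<in> (\<lambda>y. (y, g y)) ` Y"
    then show "(c *\<^sub>R x, c * r) \<in> (\<lambda>y. (y, g y)) ` Y" using gscl Y
      by (auto simp: subspace_scale)
  qed (use gb in auto)
  have "\<forall>Cs\<in>chains ?A. \<exists>U\<in>?A. \<forall>X\<in>Cs. X \<subseteq> U"
  proof
    fix Cs assume Cs: "Cs \<in> chains ?A"
    show "\<exists>U\<in>?A. \<forall>X\<in>Cs. X \<subseteq> U"
    proof (cases "Cs = {}")
      case True then show ?thesis using G0 by auto
    next
      case False then show ?thesis using lgraph_chain[OF Cs False] by blast
    qed
  qed
  from Zorn_Lemma2[OF this] obtain M where M: "lgraph Y g C M"
    and max: "\<And>X. lgraph Y g C X \<Longrightarrow> M \<subseteq> X \<Longrightarrow> X = M" by auto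
  have ne: "Y \<noteq> {}" using Y subspace_0 by blast
  have tot: "\<forall>x. \<exists>r. (x,r) \<in> M"
  proof (rule ccontr)
    assume "\<not> ?thesis"
    then obtain x0 where "\<forall>r. (x0,r) \<notin> M" by blast
    from lgraph_extend[OF M C ne this] max show False by blast
  qed
  define f where "f x = (SOME r. (x,r) \<in> M)" for x
  have fM: "(x, f x) \<in> M" for x unfolding f_def using tot someI_ex by metis
  from M have funct: "\<And>x r s. (x,r)\<in>M \<Longrightarrow> (x,s)\<in>M \<Longrightarrow> r=s"
    and add: "\<And>x r y s. (x,r)\<in>M \<Longrightarrow> (y,s)\<in>M \<Longrightarrow> (x+y,r+s)\<in>M"
    and scl: "\<And>x r c. (x,r)\<in>M \<Longrightarrow> (c *\<^sub>R x, c*r)\<in>M"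
    and Yin: "\<And>y. y\<in>Y \<Longrightarrow> (y, g y)\<in>M"
    and bnd: "\<And>x r. (x,r)\<in>M \<Longrightarrow> r \<le> C * norm x"
    using lg_fun[OF M] lg_add[OF M] lg_scl[OF M] lg_Y[OF M] lg_bnd[OF M] by auto
  have "linear f"
  proof (rule linearI)
    fix x y show "f (x + y) = f x + f y" using funct[OF fM add[OF fM fM]] by simp
  next
    fix c x show "f (c *\<^sub>R x) = c *\<^sub>R f x" using funct[OF fM scl[OF fM]] by simp
  qed
  moreover have "\<forall>y\<in>Y. f y = g y" using funct[OF fM Yin] by blast
  moreover have "\<forall>x. f x \<le> C * norm x" using bnd fM by blast
  ultimately show ?thesis by blast
qed


lemma dual_UNIV: "dual_on UNIV (+) (*\<^sub>R) norm f \<longleftrightarrow> bounded_linear (f :: 'a::real_normed_vector \<Rightarrow> real)"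
proof
  assume "dual_on UNIV (+) (*\<^sub>R) norm f"
  then obtain K where a: "\<And>u v. f (u+v) = f u + f v" and s: "\<And>c v. f (c *\<^sub>R v) = c * f v"
    and b: "\<And>v. \<bar>f v\<bar> \<le> K * norm v"
    unfolding dual_on_def lin_on_def bdd_on_def by blast
  show "bounded_linear f"
    by (rule bounded_linear_intro[where K=K]) (use a s b in \<open>auto simp: mult.commute\<close>)
next
  assume f: "bounded_linear f"
  then obtain K where "\<And>x. norm (f x) \<le> norm x * K" using bounded_linear.bounded by blast
  then show "dual_on UNIV (+) (*\<^sub>R) norm f"
    unfolding dual_on_def lin_on_def bdd_on_def
    using bounded_linear.linear[OF f] linear_add linear_scale
    by (metis UNIV_I mult.commute real_norm_def real_scaleR_def)
qed

lemma bl_dual_on: "bounded_linear f \<Longrightarrow> dual_on S (+) (*\<^sub>R) norm (f :: 'a::real_normed_vector \<Rightarrow> real)"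
  using dual_UNIV[of f] unfolding dual_on_def lin_on_def bdd_on_def by blast

lemma fnorm_le_onorm:
  assumes f: "bounded_linear f" and S: "0 \<in> S"
  shows "fnorm S norm (f :: 'a::real_normed_vector \<Rightarrow> real) \<le> onorm f"
  unfolding fnorm_def
proof (rule cSUP_least)
  show "{v \<in> S. norm v \<le> 1} \<noteq> {}" using S by auto
next
  fix v assume "v \<in> {v \<in> S. norm v \<le> 1}"
  then have "norm v \<le> 1" by auto
  have "\<bar>f v\<bar> \<le> onorm f * norm v" using onorm[OF f, of v] by simp
  also have "\<dots> \<le> onorm f" using \<open>norm v \<le> 1\<close> onorm_pos_le[OF f]
    by (simp add: mult_left_le)
  finally show "\<bar>f v\<bar> \<le> onorm f" .
qed

lemma fnorm_bdd:
  assumes "bdd_on S norm f"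
  shows "bdd_above ((\<lambda>v. \<bar>f v\<bar>) ` {v\<in>S. norm v \<le> 1})"
proof -
  obtain K where K: "\<And>v. v \<in> S \<Longrightarrow> \<bar>f v\<bar> \<le> K * norm v" using assms unfolding bdd_on_def by blast
  have "\<bar>f v\<bar> \<le> max K 0" if "v\<in>S" "norm v \<le> 1" for v
  proof -
    have "K * norm v \<le> max K 0 * norm v" by (simp add: mult_right_mono)
    also have "\<dots> \<le> max K 0" using that by (simp add: mult_left_le)
    finally show ?thesis using K[OF that(1)] by simp
  qed
  then show ?thesis unfolding bdd_above_def by blast
qed

lemma fnorm_upper:
  assumes "bdd_on S norm f" "v \<in> S" "norm v \<le> 1"
  shows "\<bar>f v\<bar> \<le> fnorm S norm f"
  unfolding fnorm_def using assms by (intro cSUP_upper[OF _ fnorm_bdd]) auto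

lemma fnorm_attain:
  assumes f: "bounded_linear f" and S: "0 \<in> S" and y: "y \<in> S" "norm y = 1" "f y = onorm f"
  shows "fnorm S norm (f :: 'a::real_normed_vector \<Rightarrow> real) = onorm f"
proof (rule antisym)
  show "fnorm S norm f \<le> onorm f" by (rule fnorm_le_onorm[OF f S])
  have "bdd_on S norm f" using bl_dual_on[OF f] unfolding dual_on_def by blast
  from fnorm_upper[OF this y(1)] y show "onorm f \<le> fnorm S norm f" by simp
qed

lemma fnorm_UNIV:
  assumes f: "bounded_linear f"
  shows "fnorm UNIV norm (f :: 'a::real_normed_vector \<Rightarrow> real) = onorm f"
proof (rule antisym)
  show "fnorm UNIV norm f \<le> onorm f" by (rule fnorm_le_onorm[OF f]) simp
  have bd: "bdd_on UNIV norm f" using bl_dual_on[OF f] unfolding dual_on_def by blast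
  have nn: "0 \<le> fnorm UNIV norm f" using fnorm_upper[OF bd, of 0] by simp
  show "onorm f \<le> fnorm UNIV norm f"
  proof (rule onorm_bound[OF nn])
    fix x
    show "norm (f x) \<le> fnorm UNIV norm f * norm x"
    proof (cases "x = 0")
      case True then show ?thesis using linear_0[OF bounded_linear.linear[OF f]] by simp
    next
      case False
      have "\<bar>f ((1 / norm x) *\<^sub>R x)\<bar> \<le> fnorm UNIV norm f"
        using False by (intro fnorm_upper[OF bd]) auto
      moreover have "f ((1 / norm x) *\<^sub>R x) = f x / norm x"
        using linear_scale[OF bounded_linear.linear[OF f]] by simp
      ultimately show ?thesis using False by (simp add: divide_le_eq abs_div mult.commute)
    qed
  qed
qed

lemma dual_bound:
  assumes Y: "subspace Y" and g: "dual_on Y (+) (*\<^sub>R) norm g" and y: "y \<in> Y"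
  shows "\<bar>g y\<bar> \<le> fnorm Y norm g * norm y"
proof -
  have bd: "bdd_on Y norm g" and sc: "\<And>c v. v \<in> Y \<Longrightarrow> g (c *\<^sub>R v) = c * g v"
    using g unfolding dual_on_def lin_on_def by auto
  show ?thesis
  proof (cases "y = 0")
    case True then show ?thesis using sc[of 0 0] Y subspace_0 by fastforce
  next
    case False
    have "(1 / norm y) *\<^sub>R y \<in> Y" using Y y by (simp add: subspace_scale)
    then have "\<bar>g ((1 / norm y) *\<^sub>R y)\<bar> \<le> fnorm Y norm g"
      using False by (intro fnorm_upper[OF bd]) auto
    moreover have "g ((1 / norm y) *\<^sub>R y) = g y / norm y" using sc[OF y] by simp
    ultimately show ?thesis using False by (simp add: divide_le_eq abs_div mult.commute)
  qed
qed

lemma fnorm_cong: "(\<And>v. v \<in> S \<Longrightarrow> f v = g v) \<Longrightarrow> fnorm S N f = fnorm S N g"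
  unfolding fnorm_def by (intro arg_cong[where f=Sup] image_cong) auto

lemma hb_ext:
  fixes g :: "'a::real_normed_vector \<Rightarrow> real"
  assumes Y: "subspace Y" and g: "dual_on Y (+) (*\<^sub>R) norm g"
  shows "\<exists>f. bounded_linear f \<and> (\<forall>y\<in>Y. f y = g y) \<and> onorm f = fnorm Y norm g"
proof -
  let ?C = "fnorm Y norm g"
  have bd: "bdd_on Y norm g" using g unfolding dual_on_def by blast
  have C: "0 \<le> ?C" using fnorm_upper[OF bd, of 0] Y subspace_0 by fastforce
  have "\<forall>y\<in>Y. g y \<le> ?C * norm y" using dual_bound[OF Y g] by fastforce
  moreover have "\<forall>u\<in>Y. \<forall>v\<in>Y. g (u+v) = g u + g v" "\<forall>c. \<forall>v\<in>Y. g (c *\<^sub>R v) = c * g v"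
    using g unfolding dual_on_def lin_on_def by auto
  ultimately obtain f where f: "linear f" "\<forall>y\<in>Y. f y = g y" "\<forall>x. f x \<le> ?C * norm x"
    using hahn_banach[OF Y _ _ _ C] by blast
  have ab: "\<bar>f x\<bar> \<le> ?C * norm x" for x
    using f(3)[rule_format, of x] f(3)[rule_format, of "-x"] linear_neg[OF f(1), of x] by auto
  have bl: "bounded_linear f"
    by (rule bounded_linear_intro[where K="?C"])
       (use linear_add[OF f(1)] linear_scale[OF f(1)] ab in \<open>auto simp: mult.commute\<close>)
  have "onorm f \<le> ?C" using ab by (intro onorm_bound[OF C]) auto
  moreover have "fnorm Y norm f \<le> onorm f" using fnorm_le_onorm[OF bl] Y subspace_0 by blast
  moreover have "fnorm Y norm f = ?C" using f(2) by (intro fnorm_cong) auto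
  ultimately show ?thesis using bl f(2) by force
qed


lemma INF_annih:
  assumes f: "bounded_linear f" and y: "y \<in> Y" "norm y = 1" "f y = onorm f"
  shows "(INF h\<in>annihilator Y. onorm (\<lambda>x. f x - h x)) = onorm (f :: 'a::real_normed_vector \<Rightarrow> real)"
proof -
  have lb: "onorm f \<le> onorm (\<lambda>x. f x - h x)" if "h \<in> annihilator Y" for h
  proof -
    have hb: "bounded_linear h" "h y = 0" using that y unfolding annihilator_def by auto
    have "norm (f y - h y) \<le> onorm (\<lambda>x. f x - h x) * norm y"
      using onorm[OF bounded_linear_sub[OF f hb(1)], of y] by simp
    then show ?thesis using hb y by simp
  qed
  have z: "(\<lambda>x. 0) \<in> annihilator Y" unfolding annihilator_def by simp
  show ?thesis
  proof (rule antisym)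
    have "(INF h\<in>annihilator Y. onorm (\<lambda>x. f x - h x)) \<le> onorm (\<lambda>x. f x - 0)"
      by (rule cINF_lower[OF _ z]) (use lb in \<open>auto simp: bdd_below_def\<close>)
    then show "(INF h\<in>annihilator Y. onorm (\<lambda>x. f x - h x)) \<le> onorm f" by simp
    show "onorm f \<le> (INF h\<in>annihilator Y. onorm (\<lambda>x. f x - h x))"
      using z lb by (intro cINF_greatest) auto
  qed
qed

lemma best_eq:
  assumes f: "bounded_linear f" and y: "y \<in> Y" "norm y = 1" "f y = onorm f"
  shows "best_approx_dual (annihilator Y) f = {h \<in> annihilator Y. onorm (\<lambda>x. f x - h x) = onorm (f :: 'a::real_normed_vector \<Rightarrow> real)}"
  unfolding best_approx_dual_def INF_annih[OF assms] ..

lemma part_ac: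
  fixes Y :: "'a::real_normed_vector set"
  assumes Y: "subspace Y"
  shows "wU UNIV (+) (*\<^sub>R) norm Y \<longleftrightarrow>
           (\<forall>f. bounded_linear f \<and> (\<exists>y\<in>Y. norm y = 1 \<and> f y = onorm f) \<longrightarrow>
              best_approx_dual (annihilator Y) f = {\<lambda>x. 0})"
proof
  assume W: "wU UNIV (+) (*\<^sub>R) norm Y"
  show "\<forall>f. bounded_linear f \<and> (\<exists>y\<in>Y. norm y = 1 \<and> f y = onorm f) \<longrightarrow>
              best_approx_dual (annihilator Y) f = {\<lambda>x. 0}"
  proof (intro allI impI, elim conjE bexE)
    fix f :: "'a \<Rightarrow> real" and y assume f: "bounded_linear f" and y: "y \<in> Y" "norm y = 1" "f y = onorm f"
    have fY: "fnorm Y norm f = onorm f" using fnorm_attain[OF f subspace_0[OF Y] y] by auto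
    have uniq: "\<forall>f1 f2. dual_on UNIV (+) (*\<^sub>R) norm f1 \<and> (\<forall>w\<in>Y. f1 w = f w) \<and> fnorm UNIV norm f1 = fnorm Y norm f \<and>
                dual_on UNIV (+) (*\<^sub>R) norm f2 \<and> (\<forall>w\<in>Y. f2 w = f w) \<and> fnorm UNIV norm f2 = fnorm Y norm f
                \<longrightarrow> (\<forall>v\<in>UNIV. f1 v = f2 v)"
    proof -
      have prem: "dual_on Y (+) (*\<^sub>R) norm f \<and> (\<exists>w0\<in>Y. norm w0 = 1 \<and> f w0 = fnorm Y norm f)"
        using bl_dual_on[OF f, of Y] y fY by auto
      show ?thesis using W[unfolded wU_def, rule_format, OF prem] by blast
    qed
    show "best_approx_dual (annihilator Y) f = {\<lambda>x. 0}"
      unfolding best_eq[OF f y]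
    proof (intro equalityI subsetI)
      fix h assume "h \<in> {h \<in> annihilator Y. onorm (\<lambda>x. f x - h x) = onorm f}"
      then have h: "bounded_linear h" "\<forall>y\<in>Y. h y = 0" "onorm (\<lambda>x. f x - h x) = onorm f"
        unfolding annihilator_def by auto
      have bl2: "bounded_linear (\<lambda>x. f x - h x)" using bounded_linear_sub[OF f h(1)] .
      have p1: "dual_on UNIV (+) (*\<^sub>R) norm f" "dual_on UNIV (+) (*\<^sub>R) norm (\<lambda>x. f x - h x)"
        using dual_UNIV f bl2 by blast+
      have p2: "fnorm UNIV norm f = fnorm Y norm f" "fnorm UNIV norm (\<lambda>x. f x - h x) = fnorm Y norm f"
        using fnorm_UNIV[OF f] fnorm_UNIV[OF bl2] h(3) fY by simp_all
      have p3: "\<forall>w\<in>Y. f w - h w = f w" using h(2) by simp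
      have "\<forall>v\<in>UNIV. f v = f v - h v"
        using uniq p1 p2 p3 by blast
      then show "h \<in> {\<lambda>x. 0}" by auto
    next
      fix h assume "h \<in> {\<lambda>x::'a. 0::real}"
      then show "h \<in> {h \<in> annihilator Y. onorm (\<lambda>x. f x - h x) = onorm f}"
        unfolding annihilator_def by simp
    qed
  qed
next
  assume C: "\<forall>f. bounded_linear f \<and> (\<exists>y\<in>Y. norm y = 1 \<and> f y = onorm f) \<longrightarrow>
              best_approx_dual (annihilator Y) f = {\<lambda>x. 0}"
  show "wU UNIV (+) (*\<^sub>R) norm Y" unfolding wU_def
  proof (intro allI impI)
    fix g assume P: "dual_on Y (+) (*\<^sub>R) norm g \<and> (\<exists>w0\<in>Y. norm w0 = 1 \<and> g w0 = fnorm Y norm g)"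
    then obtain w0 where g: "dual_on Y (+) (*\<^sub>R) norm g" and w0: "w0 \<in> Y" "norm w0 = 1" "g w0 = fnorm Y norm g"
      by blast
    from hb_ext[OF Y g] obtain f where "bounded_linear f" "\<forall>y\<in>Y. f y = g y" "onorm f = fnorm Y norm g"
      by blast
    then have E: "\<exists>f. dual_on UNIV (+) (*\<^sub>R) norm f \<and> (\<forall>w\<in>Y. f w = g w) \<and> fnorm UNIV norm f = fnorm Y norm g"
    proof -
      assume A: "bounded_linear f" "\<forall>y\<in>Y. f y = g y" "onorm f = fnorm Y norm g"
      have "dual_on UNIV (+) (*\<^sub>R) norm f" using dual_UNIV A(1) by blast
      moreover have "fnorm UNIV norm f = fnorm Y norm g" using fnorm_UNIV[OF A(1)] A(3) by simp
      ultimately show ?thesis using A(2) by blast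
    qed
    have U: "\<forall>f1 f2. dual_on UNIV (+) (*\<^sub>R) norm f1 \<and> (\<forall>w\<in>Y. f1 w = g w) \<and> fnorm UNIV norm f1 = fnorm Y norm g \<and>
                dual_on UNIV (+) (*\<^sub>R) norm f2 \<and> (\<forall>w\<in>Y. f2 w = g w) \<and> fnorm UNIV norm f2 = fnorm Y norm g
                \<longrightarrow> (\<forall>v\<in>UNIV. f1 v = f2 v)"
    proof (intro allI impI)
      fix f1 f2
      assume A: "dual_on UNIV (+) (*\<^sub>R) norm f1 \<and> (\<forall>w\<in>Y. f1 w = g w) \<and> fnorm UNIV norm f1 = fnorm Y norm g \<and>
                dual_on UNIV (+) (*\<^sub>R) norm f2 \<and> (\<forall>w\<in>Y. f2 w = g w) \<and> fnorm UNIV norm f2 = fnorm Y norm g"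
      then have a: "dual_on UNIV (+) (*\<^sub>R) norm f1" "\<forall>w\<in>Y. f1 w = g w" "fnorm UNIV norm f1 = fnorm Y norm g"
         "dual_on UNIV (+) (*\<^sub>R) norm f2" "\<forall>w\<in>Y. f2 w = g w" "fnorm UNIV norm f2 = fnorm Y norm g"
        by blast+
      have b1: "bounded_linear f1" and b2: "bounded_linear f2" using a dual_UNIV by auto
      have n1: "onorm f1 = fnorm Y norm g" and n2: "onorm f2 = fnorm Y norm g"
        using a(3,6) fnorm_UNIV[OF b1] fnorm_UNIV[OF b2] by auto
      have att: "f1 w0 = onorm f1" using a(2) w0 n1 by auto
      have BA: "best_approx_dual (annihilator Y) f1 = {\<lambda>x. 0}"
        using C b1 w0 att by blast
      let ?h = "\<lambda>x. f1 x - f2 x"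
      have "?h \<in> annihilator Y" unfolding annihilator_def using bounded_linear_sub[OF b1 b2] a by auto
      moreover have "onorm (\<lambda>x. f1 x - ?h x) = onorm f1" using n1 n2 by simp
      ultimately have "?h \<in> best_approx_dual (annihilator Y) f1"
        unfolding best_eq[OF b1 w0(1) w0(2) att] by blast
      then have "?h = (\<lambda>x. 0)" using BA by blast
      then show "\<forall>v\<in>UNIV. f1 v = f2 v" by (metis eq_iff_diff_eq_0)
    qed
    show "(\<exists>f. dual_on UNIV (+) (*\<^sub>R) norm f \<and> (\<forall>w\<in>Y. f w = g w) \<and> fnorm UNIV norm f = fnorm Y norm g) \<and>
       (\<forall>f1 f2. dual_on UNIV (+) (*\<^sub>R) norm f1 \<and> (\<forall>w\<in>Y. f1 w = g w) \<and> fnorm UNIV norm f1 = fnorm Y norm g \<and>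
                dual_on UNIV (+) (*\<^sub>R) norm f2 \<and> (\<forall>w\<in>Y. f2 w = g w) \<and> fnorm UNIV norm f2 = fnorm Y norm g
                \<longrightarrow> (\<forall>v\<in>UNIV. f1 v = f2 v))" using E U by blast
  qed
qed


context
  fixes Z :: "'a::real_normed_vector set"
  assumes Z: "subspace Z"
begin

lemma coset_sub: "x - y \<in> Z \<Longrightarrow> coset Z x \<subseteq> coset Z y"
proof
  fix w assume d: "x - y \<in> Z" and "w \<in> coset Z x"
  then obtain z where z: "z \<in> Z" "w = x + z" unfolding coset_def by auto
  have "x - y + z \<in> Z" using Z d z by (simp add: subspace_add)
  moreover have "w = y + (x - y + z)" using z by simp
  ultimately show "w \<in> coset Z y" unfolding coset_def by blast
qed

lemma coset_eq: "coset Z x = coset Z y \<longleftrightarrow> x - y \<in> Z"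
proof
  assume e: "coset Z x = coset Z y"
  have "x \<in> coset Z x" unfolding coset_def using subspace_0[OF Z] by force
  then obtain z where "z \<in> Z" "x = y + z" using e unfolding coset_def by auto
  then show "x - y \<in> Z" by simp
next
  assume d: "x - y \<in> Z"
  then have "y - x \<in> Z" using subspace_neg[OF Z d] by simp
  then show "coset Z x = coset Z y" using coset_sub d by blast
qed

lemma qadd_coset: "qadd (coset Z x) (coset Z y) = coset Z (x + y)"
proof (intro equalityI subsetI)
  fix w assume "w \<in> qadd (coset Z x) (coset Z y)"
  then obtain z1 z2 where "z1 \<in> Z" "z2 \<in> Z" "w = (x + z1) + (y + z2)"
    unfolding qadd_def coset_def by auto
  moreover have "(x + z1) + (y + z2) = (x + y) + (z1 + z2)" by (simp add: algebra_simps)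
  ultimately show "w \<in> coset Z (x + y)" unfolding coset_def using Z by (auto simp: subspace_add)
next
  fix w assume "w \<in> coset Z (x + y)"
  then obtain z where "z \<in> Z" "w = (x + y) + z" unfolding coset_def by auto
  moreover have "(x + y) + z = (x + z) + (y + 0)" by (simp add: algebra_simps)
  ultimately show "w \<in> qadd (coset Z x) (coset Z y)" unfolding qadd_def coset_def
    using subspace_0[OF Z] by blast
qed

lemma qscale_coset: "qscale Z c (coset Z x) = coset Z (c *\<^sub>R x)"
proof (intro equalityI subsetI)
  fix w assume "w \<in> qscale Z c (coset Z x)"
  then obtain z1 z2 where "z1 \<in> Z" "z2 \<in> Z" "w = c *\<^sub>R (x + z1) + z2"
    unfolding qscale_def coset_def by auto
  moreover have "c *\<^sub>R (x + z1) + z2 = c *\<^sub>R x + (c *\<^sub>R z1 + z2)" by (simp add: algebra_simps)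
  ultimately show "w \<in> coset Z (c *\<^sub>R x)" unfolding coset_def using Z
    by (auto simp: subspace_add subspace_scale)
next
  fix w assume "w \<in> coset Z (c *\<^sub>R x)"
  then obtain z where "z \<in> Z" "w = c *\<^sub>R x + z" unfolding coset_def by auto
  moreover have xin: "x \<in> coset Z x" unfolding coset_def using subspace_0[OF Z] by force
  ultimately show "w \<in> qscale Z c (coset Z x)" unfolding qscale_def by blast
qed

lemma qnorm_le: "x - x' \<in> Z \<Longrightarrow> qnorm (coset Z x) \<le> norm x'"
proof -
  assume "x - x' \<in> Z"
  then have e: "coset Z x = coset Z x'" using coset_eq by blast
  have "x' \<in> coset Z x'" unfolding coset_def using subspace_0[OF Z] by force
  then show ?thesis unfolding qnorm_def e using infdist_le[of x' "coset Z x'" 0] by simp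
qed

lemma qnorm_rep:
  assumes P: "proximinal Z"
  shows "\<exists>x'. x - x' \<in> Z \<and> norm x' = qnorm (coset Z x)"
proof -
  obtain z where z: "z \<in> Z" "dist x z = infdist x Z" using P unfolding proximinal_def by blast
  have "norm (x - z) \<le> qnorm (coset Z x)"
    unfolding qnorm_def
  proof -
    have ne: "coset Z x \<noteq> {}" unfolding coset_def using subspace_0[OF Z] by blast
    show "norm (x - z) \<le> infdist 0 (coset Z x)"
      unfolding infdist_notempty[OF ne]
    proof (rule cINF_greatest[OF ne])
      fix a assume "a \<in> coset Z x"
      then obtain z' where z': "z' \<in> Z" "a = x + z'" unfolding coset_def by auto
      have "-z' \<in> Z" using subspace_neg[OF Z z'(1)] .
      then have "infdist x Z \<le> dist x (-z')" by (rule infdist_le)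
      moreover have "dist x (-z') = norm (x + z')" by (simp add: dist_norm)
      moreover have "dist 0 a = norm (x + z')" using z'(2) by (simp add: dist_0_norm)
      ultimately show "norm (x - z) \<le> dist 0 a" using z by (simp add: dist_norm)
    qed
  qed
  moreover have "qnorm (coset Z x) \<le> norm (x - z)" using qnorm_le[of x "x - z"] z by simp
  ultimately show ?thesis using z by (intro exI[of _ "x - z"]) auto
qed

lemma transfer_dual:
  assumes P: "proximinal Z" and S: "subspace S" and ZS: "Z \<subseteq> S"
  shows "dual_on (coset Z ` S) qadd (qscale Z) qnorm F \<longleftrightarrow> dual_on S (+) (*\<^sub>R) norm (\<lambda>x. F (coset Z x))"
proof
  assume d: "dual_on (coset Z ` S) qadd (qscale Z) qnorm F"
  have a: "\<And>u v. u \<in> coset Z ` S \<Longrightarrow> v \<in> coset Z ` S \<Longrightarrow> F (qadd u v) = F u + F v"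
    and s: "\<And>c v. v \<in> coset Z ` S \<Longrightarrow> F (qscale Z c v) = c * F v"
    using conjunct1[OF d[unfolded dual_on_def]] unfolding lin_on_def by metis+
  obtain K where b: "\<And>v. v \<in> coset Z ` S \<Longrightarrow> \<bar>F v\<bar> \<le> K * qnorm v"
    using d unfolding dual_on_def bdd_on_def by metis
  have "lin_on S (+) (*\<^sub>R) (\<lambda>x. F (coset Z x))" unfolding lin_on_def
  proof (intro conjI ballI allI)
    fix u v assume "u \<in> S" "v \<in> S"
    then have "F (qadd (coset Z u) (coset Z v)) = F (coset Z u) + F (coset Z v)" by (intro a) auto
    then show "F (coset Z (u + v)) = F (coset Z u) + F (coset Z v)" by (simp add: qadd_coset)
  next
    fix c v assume "v \<in> S"
    then have "F (qscale Z c (coset Z v)) = c * F (coset Z v)" by (intro s) auto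
    then show "F (coset Z (c *\<^sub>R v)) = c * F (coset Z v)" by (simp add: qscale_coset)
  qed
  moreover have "bdd_on S norm (\<lambda>x. F (coset Z x))" unfolding bdd_on_def
  proof (intro exI[of _ "max K 0"] ballI)
    fix x assume x: "x \<in> S"
    have "\<bar>F (coset Z x)\<bar> \<le> K * qnorm (coset Z x)" using b[of "coset Z x"] x by blast
    also have "\<dots> \<le> max K 0 * qnorm (coset Z x)"
      by (intro mult_right_mono) (auto simp: qnorm_def infdist_nonneg)
    also have "\<dots> \<le> max K 0 * norm x" using qnorm_le[of x x] subspace_0[OF Z]
      by (intro mult_left_mono) auto
    finally show "\<bar>F (coset Z x)\<bar> \<le> max K 0 * norm x" .
  qed
  ultimately show "dual_on S (+) (*\<^sub>R) norm (\<lambda>x. F (coset Z x))" unfolding dual_on_def by blast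
next
  assume d: "dual_on S (+) (*\<^sub>R) norm (\<lambda>x. F (coset Z x))"
  have a: "\<And>u v. u \<in> S \<Longrightarrow> v \<in> S \<Longrightarrow> F (coset Z (u + v)) = F (coset Z u) + F (coset Z v)"
    and s: "\<And>c v. v \<in> S \<Longrightarrow> F (coset Z (c *\<^sub>R v)) = c * F (coset Z v)"
    using conjunct1[OF d[unfolded dual_on_def]] unfolding lin_on_def by metis+
  obtain K where b: "\<And>v. v \<in> S \<Longrightarrow> \<bar>F (coset Z v)\<bar> \<le> K * norm v"
    using d unfolding dual_on_def bdd_on_def by metis
  have "lin_on (coset Z ` S) qadd (qscale Z) F" unfolding lin_on_def
  proof (intro conjI ballI allI)
    fix U V assume "U \<in> coset Z ` S" "V \<in> coset Z ` S"
    then obtain u v where "u \<in> S" "v \<in> S" "U = coset Z u" "V = coset Z v" by blast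
    then show "F (qadd U V) = F U + F V" using a[of u v] by (simp add: qadd_coset)
  next
    fix c V assume "V \<in> coset Z ` S"
    then obtain v where "v \<in> S" "V = coset Z v" by blast
    then show "F (qscale Z c V) = c * F V" using s[of v c] by (simp add: qscale_coset)
  qed
  moreover have "bdd_on (coset Z ` S) qnorm F" unfolding bdd_on_def
  proof (intro exI[of _ K] ballI)
    fix A assume "A \<in> coset Z ` S"
    then obtain x where x: "x \<in> S" "A = coset Z x" by auto
    obtain x' where x': "x - x' \<in> Z" "norm x' = qnorm A" using qnorm_rep[OF P, of x] x by auto
    have "x' \<in> S" using subspace_diff[OF S x(1), of "x - x'"] x' ZS by auto
    moreover have "coset Z x' = A" using x(2) x'(1) coset_eq[of x x'] by auto
    ultimately show "\<bar>F A\<bar> \<le> K * qnorm A" using b[of x'] x'(2) by simp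
  qed
  ultimately show "dual_on (coset Z ` S) qadd (qscale Z) qnorm F" unfolding dual_on_def by blast
qed

lemma transfer_fnorm:
  assumes P: "proximinal Z" and S: "subspace S" and ZS: "Z \<subseteq> S"
  shows "fnorm (coset Z ` S) qnorm F = fnorm S norm (\<lambda>x. F (coset Z x))"
proof -
  have "(\<lambda>v. \<bar>F v\<bar>) ` {v \<in> coset Z ` S. qnorm v \<le> 1} = (\<lambda>v. \<bar>F (coset Z v)\<bar>) ` {v \<in> S. norm v \<le> 1}"
  proof (intro equalityI subsetI)
    fix r assume "r \<in> (\<lambda>v. \<bar>F v\<bar>) ` {v \<in> coset Z ` S. qnorm v \<le> 1}"
    then obtain x where x: "x \<in> S" "qnorm (coset Z x) \<le> 1" "r = \<bar>F (coset Z x)\<bar>" by auto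
    obtain x' where x': "x - x' \<in> Z" "norm x' = qnorm (coset Z x)" using qnorm_rep[OF P, of x] by auto
    have "x' \<in> S" using subspace_diff[OF S x(1), of "x - x'"] x' ZS by auto
    moreover have "coset Z x' = coset Z x" using x'(1) coset_eq[of x x'] by auto
    moreover have "norm x' \<le> 1" using x(2) x'(2) by simp
    ultimately show "r \<in> (\<lambda>v. \<bar>F (coset Z v)\<bar>) ` {v \<in> S. norm v \<le> 1}"
      using x(3) by (intro image_eqI[of _ _ x']) auto
  next
    fix r assume "r \<in> (\<lambda>v. \<bar>F (coset Z v)\<bar>) ` {v \<in> S. norm v \<le> 1}"
    then obtain x where x: "x \<in> S" "norm x \<le> 1" "r = \<bar>F (coset Z x)\<bar>" by auto
    have "qnorm (coset Z x) \<le> 1" using qnorm_le[of x x] subspace_0[OF Z] x by auto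
    then show "r \<in> (\<lambda>v. \<bar>F v\<bar>) ` {v \<in> coset Z ` S. qnorm v \<le> 1}" using x by auto
  qed
  then show ?thesis unfolding fnorm_def by simp
qed

lemma lift_fun:
  assumes "\<And>x x'. x - x' \<in> Z \<Longrightarrow> f x = f x'"
  shows "(\<lambda>A. f (SOME x. A = coset Z x)) (coset Z y) = f y"
proof -
  have "coset Z y = coset Z (SOME x. coset Z y = coset Z x)" by (rule someI[of _ y]) simp
  then have "y - (SOME x. coset Z y = coset Z x) \<in> Z" using coset_eq by blast
  then show ?thesis using assms by simp
qed

end


lemma dual_zero:
  assumes "dual_on S (+) (*\<^sub>R) norm g" "0 \<in> S"
  shows "g 0 = 0"
proof -
  have "g (0 *\<^sub>R 0) = 0 * g 0" using assms unfolding dual_on_def lin_on_def by blast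
  then show ?thesis by simp
qed

lemma part_a_b:
  fixes Y :: "'a::real_normed_vector set"
  assumes Y: "subspace Y" and W: "wU UNIV (+) (*\<^sub>R) norm Y"
    and Z: "subspace Z" and ZY: "Z \<subseteq> Y" and P: "proximinal Z"
  shows "wU (quot_carrier Z UNIV) qadd (qscale Z) qnorm (quot_carrier Z Y)"
  unfolding quot_carrier_def wU_def
proof (intro allI impI)
  fix G assume PG: "dual_on (coset Z ` Y) qadd (qscale Z) qnorm G \<and>
     (\<exists>w0\<in>coset Z ` Y. qnorm w0 = 1 \<and> G w0 = fnorm (coset Z ` Y) qnorm G)"
  then obtain w0 where dG: "dual_on (coset Z ` Y) qadd (qscale Z) qnorm G" and w0: "w0 \<in> coset Z ` Y"
    "qnorm w0 = 1" "G w0 = fnorm (coset Z ` Y) qnorm G" by blast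
  define g where "g = (\<lambda>x. G (coset Z x))"
  have dg: "dual_on Y (+) (*\<^sub>R) norm g" using transfer_dual[OF Z P Y ZY, of G] dG unfolding g_def by simp
  have fng: "fnorm (coset Z ` Y) qnorm G = fnorm Y norm g" using transfer_fnorm[OF Z P Y ZY, of G] unfolding g_def by simp
  obtain y where y: "y \<in> Y" "w0 = coset Z y" using w0 by blast
  obtain y' where y': "y - y' \<in> Z" "norm y' = qnorm (coset Z y)" using qnorm_rep[OF Z P] by blast
  have y'Y: "y' \<in> Y" using subspace_diff[OF Y y(1), of "y - y'"] y' ZY by auto
  have cy: "coset Z y' = w0" using y(2) y'(1) coset_eq[OF Z, of y y'] by auto
  have "norm y' = 1" using y'(2) y(2) w0(2) by simp
  moreover have "g y' = fnorm Y norm g" using cy w0(3) fng unfolding g_def by simp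
  ultimately have att: "\<exists>w0\<in>Y. norm w0 = 1 \<and> g w0 = fnorm Y norm g"
    using y'Y by blast
  note WW = W[unfolded wU_def, rule_format, OF conjI[OF dg att]]
  obtain f where f: "dual_on UNIV (+) (*\<^sub>R) norm f" "\<forall>w\<in>Y. f w = g w" "fnorm UNIV norm f = fnorm Y norm g"
    using conjunct1[OF WW] by blast
  have U: "\<And>f1 f2. dual_on UNIV (+) (*\<^sub>R) norm f1 \<Longrightarrow> (\<forall>w\<in>Y. f1 w = g w) \<Longrightarrow> fnorm UNIV norm f1 = fnorm Y norm g \<Longrightarrow>
                dual_on UNIV (+) (*\<^sub>R) norm f2 \<Longrightarrow> (\<forall>w\<in>Y. f2 w = g w) \<Longrightarrow> fnorm UNIV norm f2 = fnorm Y norm g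
                \<Longrightarrow> (\<forall>v\<in>UNIV. f1 v = f2 v)" using conjunct2[OF WW] by blast
  have g0: "g 0 = 0" using dual_zero[OF dg subspace_0[OF Y]] .
  have fadd: "f (u + v) = f u + f v" for u v using f(1) unfolding dual_on_def lin_on_def by blast
  have resp: "f x = f x'" if "x - x' \<in> Z" for x x'
  proof -
    have "x - x' \<in> Y" using that ZY by blast
    then have "f (x - x') = G (coset Z (x - x'))" using f(2) unfolding g_def by simp
    also have "coset Z (x - x') = coset Z 0" using coset_eq[OF Z, of "x - x'" 0] that by simp
    also have "G (coset Z 0) = 0" using g0 unfolding g_def .
    finally have "f (x - x') = 0" .
    then show ?thesis using fadd[of "x - x'" x'] by simp
  qed
  define F where "F A = f (SOME x. A = coset Z x)" for A
  have FF: "F (coset Z x) = f x" for x unfolding F_def using lift_fun[OF Z, where f=f, OF resp] by blast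
  have FFe: "(\<lambda>x. F (coset Z x)) = f" using FF by auto
  have dF: "dual_on (coset Z ` UNIV) qadd (qscale Z) qnorm F"
    using transfer_dual[OF Z P subspace_UNIV, of F] f(1) FFe by simp
  have nF: "fnorm (coset Z ` UNIV) qnorm F = fnorm (coset Z ` Y) qnorm G"
    using transfer_fnorm[OF Z P subspace_UNIV, of F] FFe f(3) fng by simp
  have aF: "\<forall>w\<in>coset Z ` Y. F w = G w" using FF f(2) unfolding g_def by auto
  have E: "\<exists>F. dual_on (coset Z ` UNIV) qadd (qscale Z) qnorm F \<and> (\<forall>w\<in>coset Z ` Y. F w = G w) \<and>
      fnorm (coset Z ` UNIV) qnorm F = fnorm (coset Z ` Y) qnorm G" using dF nF aF by blast
  have UU: "\<forall>v\<in>coset Z ` UNIV. F1 v = F2 v"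
    if a: "dual_on (coset Z ` UNIV) qadd (qscale Z) qnorm F1" "\<forall>w\<in>coset Z ` Y. F1 w = G w"
      "fnorm (coset Z ` UNIV) qnorm F1 = fnorm (coset Z ` Y) qnorm G"
      "dual_on (coset Z ` UNIV) qadd (qscale Z) qnorm F2" "\<forall>w\<in>coset Z ` Y. F2 w = G w"
      "fnorm (coset Z ` UNIV) qnorm F2 = fnorm (coset Z ` Y) qnorm G" for F1 F2
  proof -
    have d1: "dual_on UNIV (+) (*\<^sub>R) norm (\<lambda>x. F1 (coset Z x))"
      using transfer_dual[OF Z P subspace_UNIV, of F1] a(1) by simp
    have d2: "dual_on UNIV (+) (*\<^sub>R) norm (\<lambda>x. F2 (coset Z x))"
      using transfer_dual[OF Z P subspace_UNIV, of F2] a(4) by simp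
    have n1: "fnorm UNIV norm (\<lambda>x. F1 (coset Z x)) = fnorm Y norm g"
      using transfer_fnorm[OF Z P subspace_UNIV, of F1] a(3) fng by simp
    have n2: "fnorm UNIV norm (\<lambda>x. F2 (coset Z x)) = fnorm Y norm g"
      using transfer_fnorm[OF Z P subspace_UNIV, of F2] a(6) fng by simp
    have e1: "\<forall>w\<in>Y. F1 (coset Z w) = g w" using a(2) unfolding g_def by auto
    have e2: "\<forall>w\<in>Y. F2 (coset Z w) = g w" using a(5) unfolding g_def by auto
    have "\<forall>v\<in>UNIV. F1 (coset Z v) = F2 (coset Z v)" using U[OF d1 e1 n1 d2 e2 n2] .
    then show ?thesis by auto
  qed
  show "(\<exists>F. dual_on (coset Z ` UNIV) qadd (qscale Z) qnorm F \<and> (\<forall>w\<in>coset Z ` Y. F w = G w) \<and>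
      fnorm (coset Z ` UNIV) qnorm F = fnorm (coset Z ` Y) qnorm G) \<and>
    (\<forall>F1 F2. dual_on (coset Z ` UNIV) qadd (qscale Z) qnorm F1 \<and> (\<forall>w\<in>coset Z ` Y. F1 w = G w) \<and>
      fnorm (coset Z ` UNIV) qnorm F1 = fnorm (coset Z ` Y) qnorm G \<and>
      dual_on (coset Z ` UNIV) qadd (qscale Z) qnorm F2 \<and> (\<forall>w\<in>coset Z ` Y. F2 w = G w) \<and>
      fnorm (coset Z ` UNIV) qnorm F2 = fnorm (coset Z ` Y) qnorm G \<longrightarrow>
      (\<forall>v\<in>coset Z ` UNIV. F1 v = F2 v))"
    apply (rule conjI)
     apply (rule E)
    apply (intro allI impI)
    apply (elim conjE)
    apply (rule UU)
         apply assumption+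
    done
qed

lemma coset0: "coset {0} x = {x}" unfolding coset_def by simp

lemma prox0: "proximinal {0::'a::real_normed_vector}"
  unfolding proximinal_def by simp

lemma part_b_a:
  fixes Y :: "'a::real_normed_vector set"
  assumes Y: "subspace Y"
    and B: "wU (quot_carrier {0} UNIV) qadd (qscale {0}) qnorm (quot_carrier {0} Y)"
  shows "wU UNIV (+) (*\<^sub>R) norm Y"
  unfolding wU_def
proof (intro allI impI)
  let ?Z = "{0::'a}"
  have Z: "subspace ?Z" by simp
  have ZY: "?Z \<subseteq> Y" using subspace_0[OF Y] by simp
  note P = prox0
  have resp0: "\<And>f x x'. x - x' \<in> ?Z \<Longrightarrow> f x = f x'" by simp
  fix g assume Pg: "dual_on Y (+) (*\<^sub>R) norm g \<and> (\<exists>w0\<in>Y. norm w0 = 1 \<and> g w0 = fnorm Y norm g)"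
  then obtain w0 where dg: "dual_on Y (+) (*\<^sub>R) norm g" and w0: "w0 \<in> Y" "norm w0 = 1" "g w0 = fnorm Y norm g"
    by blast
  define G where "G A = g (SOME x. A = coset ?Z x)" for A
  have GG: "G (coset ?Z x) = g x" for x unfolding G_def using lift_fun[OF Z, where f=g, OF resp0] by blast
  have GGe: "(\<lambda>x. G (coset ?Z x)) = g" using GG by auto
  have dG: "dual_on (coset ?Z ` Y) qadd (qscale ?Z) qnorm G"
    using transfer_dual[OF Z P Y ZY, of G] dg GGe by simp
  have nG: "fnorm (coset ?Z ` Y) qnorm G = fnorm Y norm g"
    using transfer_fnorm[OF Z P Y ZY, of G] GGe by simp
  have attG: "\<exists>w\<in>coset ?Z ` Y. qnorm w = 1 \<and> G w = fnorm (coset ?Z ` Y) qnorm G"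
    using w0 GG[of w0] nG by (intro bexI[of _ "coset ?Z w0"]) (auto simp: coset0 qnorm_def dist_0_norm)
  note BB = B[unfolded wU_def quot_carrier_def, rule_format, OF conjI[OF dG attG]]
  obtain F where F: "dual_on (coset ?Z ` UNIV) qadd (qscale ?Z) qnorm F" "\<forall>w\<in>coset ?Z ` Y. F w = G w"
      "fnorm (coset ?Z ` UNIV) qnorm F = fnorm (coset ?Z ` Y) qnorm G"
    using conjunct1[OF BB] by blast
  have U0: "\<forall>F1 F2. dual_on (coset ?Z ` UNIV) qadd (qscale ?Z) qnorm F1 \<and> (\<forall>w\<in>coset ?Z ` Y. F1 w = G w) \<and>
      fnorm (coset ?Z ` UNIV) qnorm F1 = fnorm (coset ?Z ` Y) qnorm G \<and>
      dual_on (coset ?Z ` UNIV) qadd (qscale ?Z) qnorm F2 \<and> (\<forall>w\<in>coset ?Z ` Y. F2 w = G w) \<and>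
      fnorm (coset ?Z ` UNIV) qnorm F2 = fnorm (coset ?Z ` Y) qnorm G \<longrightarrow>
      (\<forall>v\<in>coset ?Z ` UNIV. F1 v = F2 v)" by (rule conjunct2[OF BB])
  have E: "\<exists>f. dual_on UNIV (+) (*\<^sub>R) norm f \<and> (\<forall>w\<in>Y. f w = g w) \<and> fnorm UNIV norm f = fnorm Y norm g"
  proof (intro exI[of _ "\<lambda>x. F (coset ?Z x)"] conjI)
    show "dual_on UNIV (+) (*\<^sub>R) norm (\<lambda>x. F (coset ?Z x))"
      using transfer_dual[OF Z P subspace_UNIV, of F] F(1) by simp
    show "\<forall>w\<in>Y. F (coset ?Z w) = g w" using F(2) GG by auto
    show "fnorm UNIV norm (\<lambda>x. F (coset ?Z x)) = fnorm Y norm g"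
      using transfer_fnorm[OF Z P subspace_UNIV, of F] F(3) nG by simp
  qed
  have UU: "\<forall>v\<in>UNIV. f1 v = f2 v"
    if a: "dual_on UNIV (+) (*\<^sub>R) norm f1" "\<forall>w\<in>Y. f1 w = g w" "fnorm UNIV norm f1 = fnorm Y norm g"
      "dual_on UNIV (+) (*\<^sub>R) norm f2" "\<forall>w\<in>Y. f2 w = g w" "fnorm UNIV norm f2 = fnorm Y norm g" for f1 f2
  proof -
    define F1 where "F1 A = f1 (SOME x. A = coset ?Z x)" for A
    define F2 where "F2 A = f2 (SOME x. A = coset ?Z x)" for A
    have FF1: "(\<lambda>x. F1 (coset ?Z x)) = f1" unfolding F1_def using lift_fun[OF Z, where f=f1, OF resp0] by blast
    have FF2: "(\<lambda>x. F2 (coset ?Z x)) = f2" unfolding F2_def using lift_fun[OF Z, where f=f2, OF resp0] by blast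
    have d1: "dual_on (coset ?Z ` UNIV) qadd (qscale ?Z) qnorm F1"
      using transfer_dual[OF Z P subspace_UNIV, of F1] a(1) FF1 by simp
    have d2: "dual_on (coset ?Z ` UNIV) qadd (qscale ?Z) qnorm F2"
      using transfer_dual[OF Z P subspace_UNIV, of F2] a(4) FF2 by simp
    have n1: "fnorm (coset ?Z ` UNIV) qnorm F1 = fnorm (coset ?Z ` Y) qnorm G"
      using transfer_fnorm[OF Z P subspace_UNIV, of F1] a(3) FF1 nG by simp
    have n2: "fnorm (coset ?Z ` UNIV) qnorm F2 = fnorm (coset ?Z ` Y) qnorm G"
      using transfer_fnorm[OF Z P subspace_UNIV, of F2] a(6) FF2 nG by simp
    have e1: "\<forall>w\<in>coset ?Z ` Y. F1 w = G w"
    proof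
      fix w assume "w \<in> coset ?Z ` Y"
      then obtain y where "y \<in> Y" "w = coset ?Z y" by blast
      then show "F1 w = G w" using a(2) GG[of y] fun_cong[OF FF1, of y] by simp
    qed
    have e2: "\<forall>w\<in>coset ?Z ` Y. F2 w = G w"
    proof
      fix w assume "w \<in> coset ?Z ` Y"
      then obtain y where "y \<in> Y" "w = coset ?Z y" by blast
      then show "F2 w = G w" using a(5) GG[of y] fun_cong[OF FF2, of y] by simp
    qed
    have "\<forall>v\<in>coset ?Z ` UNIV. F1 v = F2 v"
      using mp[OF spec[OF spec[OF U0, of F1], of F2] conjI[OF d1 conjI[OF e1 conjI[OF n1 conjI[OF d2 conjI[OF e2 n2]]]]]] .
    then show ?thesis using FF1 FF2 by (metis rangeI)
  qed
  show "(\<exists>f. dual_on UNIV (+) (*\<^sub>R) norm f \<and> (\<forall>w\<in>Y. f w = g w) \<and> fnorm UNIV norm f = fnorm Y norm g) \<and>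
    (\<forall>f1 f2. dual_on UNIV (+) (*\<^sub>R) norm f1 \<and> (\<forall>w\<in>Y. f1 w = g w) \<and> fnorm UNIV norm f1 = fnorm Y norm g \<and>
       dual_on UNIV (+) (*\<^sub>R) norm f2 \<and> (\<forall>w\<in>Y. f2 w = g w) \<and> fnorm UNIV norm f2 = fnorm Y norm g \<longrightarrow>
       (\<forall>v\<in>UNIV. f1 v = f2 v))"
    apply (rule conjI)
     apply (rule E)
    apply (intro allI impI)
    apply (elim conjE)
    apply (rule UU)
         apply assumption+
    done
qed

theorem theorem2p1:
  fixes Y :: "'a::banach set"
  assumes "subspace Y" and "closed Y"
  shows "(wU UNIV (+) (*\<^sub>R) norm Y \<longleftrightarrow>
           (\<forall>Z. subspace Z \<and> closed Z \<and> Z \<subseteq> Y \<and> proximinal Z \<longrightarrow>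
              wU (quot_carrier Z UNIV) qadd (qscale Z) qnorm (quot_carrier Z Y)))
       \<and> (wU UNIV (+) (*\<^sub>R) norm Y \<longleftrightarrow>
           (\<forall>f. bounded_linear f \<and> (\<exists>y\<in>Y. norm y = 1 \<and> f y = onorm f) \<longrightarrow>
              best_approx_dual (annihilator Y) f = {\<lambda>x. 0}))"
proof (intro conjI)
  show "wU UNIV (+) (*\<^sub>R) norm Y \<longleftrightarrow>
           (\<forall>f. bounded_linear f \<and> (\<exists>y\<in>Y. norm y = 1 \<and> f y = onorm f) \<longrightarrow>
              best_approx_dual (annihilator Y) f = {\<lambda>x. 0})"
    by (rule part_ac[OF assms(1)])
  show "wU UNIV (+) (*\<^sub>R) norm Y \<longleftrightarrow>
           (\<forall>Z. subspace Z \<and> closed Z \<and> Z \<subseteq> Y \<and> proximinal Z \<longrightarrow>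
              wU (quot_carrier Z UNIV) qadd (qscale Z) qnorm (quot_carrier Z Y))"
  proof
    assume W: "wU UNIV (+) (*\<^sub>R) norm Y"
    show "\<forall>Z. subspace Z \<and> closed Z \<and> Z \<subseteq> Y \<and> proximinal Z \<longrightarrow>
              wU (quot_carrier Z UNIV) qadd (qscale Z) qnorm (quot_carrier Z Y)"
      using part_a_b[OF assms(1) W] by blast
  next
    assume B: "\<forall>Z. subspace Z \<and> closed Z \<and> Z \<subseteq> Y \<and> proximinal Z \<longrightarrow>
              wU (quot_carrier Z UNIV) qadd (qscale Z) qnorm (quot_carrier Z Y)"
    have "wU (quot_carrier {0} UNIV) qadd (qscale {0}) qnorm (quot_carrier {0} Y)"
      using B[rule_format, of "{0}"] subspace_0[OF assms(1)] prox0 by simp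
    then show "wU UNIV (+) (*\<^sub>R) norm Y" by (rule part_b_a[OF assms(1)])
  qed
qed

end
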